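(* Assume AM defends every real machine, i.e. $d_r=e_r$ for all $r\in\mathcal M$ (so $D=1$). Let $\pi^*$ be the naive AM strategy with $\pi^*_m=e_m$ for every $m\in\mathcal M$ (the strategy called Existence). Then: (i) the M strategy $\rho$ with $\rho_m=\tfrac12$ for all $m\in\mathcal M$ is a best response of M to $\pi^*$, and $\max_{\rho\in[0,1]^{\mathcal M}}u_M(\pi^*,\rho)=\tfrac14$, so that $u_{AM}(\pi^*,\rho)=\tfrac34$ for every best response $\rho$ to $\pi^*$; (ii) for every naive AM strategy $\pi$ and every best response $\rho$ of M to $\pi$, $u_{AM}(\pi,\rho)\le\tfrac34$. Consequently, Existence, together with a best response of M, is an AM-optimal equilibrium among naive AM strategies.
   Context: Let $\mathcal M$ be a finite nonempty set of machine (environment) types. Let $e\in[0,1]^{\mathcal M}$ with $\sum_{r\in\mathcal M}e_r=1$ ($e_r$ is the fraction of all real machines that are of type $r$), and $d\in[0,1]^{\mathcal M}$ with $0\le d_r\le e_r$ ($d_r$ is the fraction of all real machines that are of type $r$ and defended by the anti-malware AM); put $D=\sum_{r}d_r$. An AM strategy $\pi$ assigns to each real machine type $r\in\mathcal M$ a vector $\pi^r\in[0,1]^{\mathcal M}$ with $\sum_{m}\pi^r_m\le 1$ ($\pi^r_m$ is the probability that AM creates a sandbox of type $m$ on a defended real machine of type $r$; with probability $1-\sum_m\pi^r_m$ no sandbox is created). AM's strategy is naive if $\pi^r$ does not depend on $r$; then we write $\pi_m$ for $\pi^r_m$. A malware (M) strategy is a vector $\rho\in[0,1]^{\mathcal M}$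 ($\rho_m$ is the probability M attacks when it perceives environment $m$). The utilities are $$u_M(\pi,\rho)=\sum_{r\in\mathcal M}\Big[(e_r-d_r)\rho_r+d_r\Big(1-\sum_{m\in\mathcal M}\pi^r_m\rho_m\Big)\rho_r\Big],$$ $$u_{AM}(\pi,\rho)=\sum_{r\in\mathcal M}d_r\Big[\sum_{m\in\mathcal M}\big(\pi^r_m\rho_m+\pi^r_m(1-\rho_m)(1-\rho_r)\big)+\Big(1-\sum_{m\in\mathcal M}\pi^r_m\Big)(1-\rho_r)\Big].$$ A best response of M to $\pi$ is any $\rho\in\arg\max_{\hat\rho\in[0,1]^{\mathcal M}}u_M(\pi,\hat\rho)$. A pair $(\pi,\rho)$ with $\rho$ a best response to $\pi$ is an equilibrium; it is AM-optimal within a class of AM strategies if $\pi$ lies in the class and $u_{AM}(\pi,\rho)\ge u_{AM}(\pi',\rho')$ for every equilibrium $(\pi',\rho')$ with $\pi'$ in the class. *)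

theory Defs
  imports Complex_Main
begin

text \<open>An AM strategy is a function p :: 'm => 'm => real, where p r m is the probability
  that AM creates a sandbox of type m on a defended real machine of type r.\<close>

definition env_distr :: "('m::finite \<Rightarrow> real) \<Rightarrow> bool" where
  "env_distr e \<longleftrightarrow> (\<forall>r. 0 \<le> e r \<and> e r \<le> 1) \<and> (\<Sum>r\<in>UNIV. e r) = 1"

definition am_strategy :: "('m::finite \<Rightarrow> 'm \<Rightarrow> real) \<Rightarrow> bool" where
  "am_strategy p \<longleftrightarrow> (\<forall>r m. 0 \<le> p r m \<and> p r m \<le> 1) \<and> (\<forall>r. (\<Sum>m\<in>UNIV. p r m) \<le> 1)"

definition naive :: "('m \<Rightarrow> 'm \<Rightarrow> real) \<Rightarrow> bool" where
  "naive p \<longleftrightarrow> (\<forall>r r'. p r = p r')"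

definition m_strategy :: "('m \<Rightarrow> real) \<Rightarrow> bool" where
  "m_strategy rho \<longleftrightarrow> (\<forall>m. 0 \<le> rho m \<and> rho m \<le> 1)"

definition u_M :: "('m::finite \<Rightarrow> real) \<Rightarrow> ('m \<Rightarrow> real) \<Rightarrow> ('m \<Rightarrow> 'm \<Rightarrow> real) \<Rightarrow> ('m \<Rightarrow> real) \<Rightarrow> real" where
  "u_M e d p rho = (\<Sum>r\<in>UNIV. (e r - d r) * rho r
       + d r * (1 - (\<Sum>m\<in>UNIV. p r m * rho m)) * rho r)"

definition u_AM :: "('m::finite \<Rightarrow> real) \<Rightarrow> ('m \<Rightarrow> 'm \<Rightarrow> real) \<Rightarrow> ('m \<Rightarrow> real) \<Rightarrow> real" where
  "u_AM d p rho = (\<Sum>r\<in>UNIV. d r *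
       ((\<Sum>m\<in>UNIV. p r m * rho m + p r m * (1 - rho m) * (1 - rho r))
        + (1 - (\<Sum>m\<in>UNIV. p r m)) * (1 - rho r)))"

definition best_response :: "('m::finite \<Rightarrow> real) \<Rightarrow> ('m \<Rightarrow> real) \<Rightarrow> ('m \<Rightarrow> 'm \<Rightarrow> real) \<Rightarrow> ('m \<Rightarrow> real) \<Rightarrow> bool" where
  "best_response e d p rho \<longleftrightarrow> m_strategy rho \<and>
     (\<forall>rho'. m_strategy rho' \<longrightarrow> u_M e d p rho' \<le> u_M e d p rho)"

definition equilibrium :: "('m::finite \<Rightarrow> real) \<Rightarrow> ('m \<Rightarrow> real) \<Rightarrow> ('m \<Rightarrow> 'm \<Rightarrow> real) \<Rightarrow> ('m \<Rightarrow> real) \<Rightarrow> bool" where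
  "equilibrium e d p rho \<longleftrightarrow> best_response e d p rho"

definition am_optimal_in :: "('m \<Rightarrow> 'm \<Rightarrow> real) set \<Rightarrow> ('m::finite \<Rightarrow> real) \<Rightarrow> ('m \<Rightarrow> real) \<Rightarrow> ('m \<Rightarrow> 'm \<Rightarrow> real) \<Rightarrow> ('m \<Rightarrow> real) \<Rightarrow> bool" where
  "am_optimal_in C e d p rho \<longleftrightarrow> equilibrium e d p rho \<and> p \<in> C \<and>
     (\<forall>p' rho'. p' \<in> C \<and> equilibrium e d p' rho' \<longrightarrow> u_AM d p' rho' \<le> u_AM d p rho)"

definition naive_strategies :: "('m::finite \<Rightarrow> 'm \<Rightarrow> real) set" where
  "naive_strategies = {p. am_strategy p \<and> naive p}"

end

theory Submission
  imports Defs
begin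

lemma uM_eq:
  assumes "\<forall>r. d r = e r"
  shows "u_M e d p rho = (\<Sum>r\<in>UNIV. e r * (1 - (\<Sum>m\<in>UNIV. p r m * rho m)) * rho r)"
  unfolding u_M_def using assms by simp

lemma inner_eq:
  fixes p rho :: "'m::finite \<Rightarrow> real" and x :: real
  shows "(\<Sum>m\<in>(UNIV::'m::finite set). p m * rho m + p m * (1 - rho m) * (1 - x))
   + (1 - (\<Sum>m\<in>UNIV. p m)) * (1 - x) = 1 - x * (1 - (\<Sum>m\<in>UNIV. p m * rho m))"
proof -
  have "(\<Sum>m\<in>(UNIV::'m set). p m * rho m + p m * (1 - rho m) * (1 - x))
     = (\<Sum>m\<in>UNIV. p m * rho m) + (1 - x) * ((\<Sum>m\<in>UNIV. p m) - (\<Sum>m\<in>UNIV. p m * rho m))"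
  proof -
    have "\<And>m. p m * (1 - rho m) * (1 - x) = (1 - x) * (p m - p m * rho m)" by algebra
    hence "(\<Sum>m\<in>(UNIV::'m set). p m * (1 - rho m) * (1 - x)) = (\<Sum>m\<in>UNIV. (1 - x) * (p m - p m * rho m))"
      by (rule sum.cong[OF refl])
    also have "\<dots> = (1 - x) * (\<Sum>m\<in>UNIV. p m - p m * rho m)" by (rule sum_distrib_left[symmetric])
    also have "\<dots> = (1 - x) * ((\<Sum>m\<in>UNIV. p m) - (\<Sum>m\<in>UNIV. p m * rho m))" by (simp add: sum_subtractf)
    finally have "(\<Sum>m\<in>(UNIV::'m set). p m * (1 - rho m) * (1 - x)) = (1 - x) * ((\<Sum>m\<in>UNIV. p m) - (\<Sum>m\<in>UNIV. p m * rho m))" .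
    thus ?thesis by (simp add: sum.distrib)
  qed
  thus ?thesis by (simp add: algebra_simps)
qed

lemma uAM_eq:
  assumes "env_distr e" "\<forall>r. d r = e r"
  shows "u_AM d p rho = 1 - u_M e d p rho"
proof -
  have "u_AM d p rho = (\<Sum>r\<in>UNIV. e r * (1 - rho r * (1 - (\<Sum>m\<in>UNIV. p r m * rho m))))"
    unfolding u_AM_def using assms(2) by (simp add: inner_eq)
  also have "\<dots> = (\<Sum>r\<in>UNIV. e r) - (\<Sum>r\<in>UNIV. e r * (1 - (\<Sum>m\<in>UNIV. p r m * rho m)) * rho r)"
  proof -
    have "\<And>r. e r * (1 - rho r * (1 - (\<Sum>m\<in>UNIV. p r m * rho m))) = e r - e r * (1 - (\<Sum>m\<in>UNIV. p r m * rho m)) * rho r"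
      by (simp add: algebra_simps)
    thus ?thesis by (simp add: sum_subtractf)
  qed
  finally show ?thesis using assms by (simp add: uM_eq env_distr_def)
qed

lemma naive_uM:
  assumes "\<forall>r. d r = e r" "naive p"
  shows "u_M e d p rho = (1 - (\<Sum>m\<in>UNIV. p r0 m * rho m)) * (\<Sum>r\<in>UNIV. e r * rho r)"
proof -
  define q where "q = p r0"
  have "\<And>r. p r = q" using assms(2) unfolding naive_def q_def by blast
  hence "u_M e d p rho = (\<Sum>r\<in>UNIV. (1 - (\<Sum>m\<in>UNIV. q m * rho m)) * (e r * rho r))"
    using assms(1) unfolding uM_eq[OF assms(1)] by (intro sum.cong) (simp_all add: mult.commute mult.left_commute)
  thus ?thesis by (simp add: sum_distrib_left q_def)
qed

lemma quarter: "(1 - (t::real)) * t \<le> 1/4"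
proof -
  have "0 \<le> (t - 1/2)^2" by simp
  thus ?thesis by (simp add: power2_eq_square algebra_simps)
qed

theorem theorem1:
  fixes e d :: "'m::finite \<Rightarrow> real" and pistar :: "'m \<Rightarrow> 'm \<Rightarrow> real"
  assumes "env_distr e"
    and "\<forall>r. d r = e r"
    and "pistar = (\<lambda>r m. e m)"
  shows "best_response e d pistar (\<lambda>m. 1/2)
       \<and> (\<forall>rho. m_strategy rho \<longrightarrow> u_M e d pistar rho \<le> 1/4)
       \<and> u_M e d pistar (\<lambda>m. 1/2) = 1/4
       \<and> (\<forall>rho. best_response e d pistar rho \<longrightarrow> u_AM d pistar rho = 3/4)
       \<and> (\<forall>p rho. am_strategy p \<and> naive p \<and> best_response e d p rho \<longrightarrow> u_AM d p rho \<le> 3/4)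
       \<and> pistar \<in> naive_strategies
       \<and> (\<forall>rho. best_response e d pistar rho \<longrightarrow> am_optimal_in naive_strategies e d pistar rho)"
proof -
  have E1: "(\<Sum>r\<in>UNIV. e r) = 1" and E0: "\<And>r. 0 \<le> e r \<and> e r \<le> 1"
    using assms(1) unfolding env_distr_def by auto
  have nv: "naive pistar" using assms(3) by (simp add: naive_def)
  have UM: "\<And>rho. u_M e d pistar rho = (1 - (\<Sum>r\<in>UNIV. e r * rho r)) * (\<Sum>r\<in>UNIV. e r * rho r)"
    using naive_uM[OF assms(2) nv] assms(3) by simp
  have A: "\<forall>rho. m_strategy rho \<longrightarrow> u_M e d pistar rho \<le> 1/4"
    using UM quarter by simp
  have half: "(\<Sum>r\<in>UNIV. e r * (1/2::real)) = 1/2"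
    by (simp add: sum_divide_distrib[symmetric] E1)
  have half2: "(\<Sum>r\<in>UNIV. e r / 2) = 1/2" using half by simp
  have B: "u_M e d pistar (\<lambda>m. 1/2) = 1/4" by (simp add: UM half2)
  have ms: "m_strategy (\<lambda>m. 1/2::real)" by (simp add: m_strategy_def)
  have BR: "best_response e d pistar (\<lambda>m. 1/2)"
    using A B ms unfolding best_response_def by (metis)
  have C: "\<forall>rho. best_response e d pistar rho \<longrightarrow> u_AM d pistar rho = 3/4"
  proof (intro allI impI)
    fix rho assume br: "best_response e d pistar rho"
    hence "u_M e d pistar rho \<ge> 1/4" using B ms unfolding best_response_def by metis
    moreover have "u_M e d pistar rho \<le> 1/4" using A br unfolding best_response_def by blast
    ultimately show "u_AM d pistar rho = 3/4" using uAM_eq[OF assms(1,2)] by simp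
  qed
  have D: "\<forall>p rho. am_strategy p \<and> naive p \<and> best_response e d p rho \<longrightarrow> u_AM d p rho \<le> 3/4"
  proof (intro allI impI)
    fix p rho assume h: "am_strategy p \<and> naive p \<and> best_response e d p rho"
    obtain r0 :: 'm where True by simp
    let ?P = "\<Sum>m\<in>UNIV. p r0 m"
    have P0: "0 \<le> ?P" using h unfolding am_strategy_def by (simp add: sum_nonneg)
    have P1: "?P \<le> 1" using h unfolding am_strategy_def by simp
    have "u_M e d p (\<lambda>m. 1/2) = (1 - ?P / 2) * (1/2)"
      using naive_uM[OF assms(2), of p "\<lambda>m. 1/2" r0] h half
      by (simp add: sum_divide_distrib[symmetric] E1)
    also have "\<dots> \<ge> 1/4" using P1 by simp
    finally have "u_M e d p rho \<ge> 1/4" using h ms unfolding best_response_def by force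
    thus "u_AM d p rho \<le> 3/4" using uAM_eq[OF assms(1,2)] by simp
  qed
  have NS: "pistar \<in> naive_strategies"
    using nv E0 E1 assms(3) by (simp add: naive_strategies_def am_strategy_def)
  have F: "\<forall>rho. best_response e d pistar rho \<longrightarrow> am_optimal_in naive_strategies e d pistar rho"
  proof (intro allI impI)
    fix rho assume br: "best_response e d pistar rho"
    have c: "u_AM d pistar rho = 3/4" using C br by blast
    show "am_optimal_in naive_strategies e d pistar rho"
      unfolding am_optimal_in_def equilibrium_def
    proof (intro conjI allI impI)
      fix p' rho' assume "p' \<in> naive_strategies \<and> best_response e d p' rho'"
      hence "u_AM d p' rho' \<le> 3/4" using D unfolding naive_strategies_def by blast
      thus "u_AM d p' rho' \<le> u_AM d pistar rho" using c by simp
    qed (use br NS in auto)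
  qed
  show ?thesis using BR A B C D NS F by blast
qed

end
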